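(* Let $H$ be a complex Hilbert space and let $P_1, P_2 \in \mathcal{L}(H)$ be orthogonal projections each satisfying the property $\mathcal{AN}^*$. Then $P_1 + P_2$, $P_1 - P_2$, $P_1 P_2$ and $P_2 P_1$ satisfy the property $\mathcal{AN}^*$.
   Context: $\mathcal{L}(H)$ is the space of bounded linear operators on $H$. For a closed subspace $M \neq \{0\}$ of $H$ and $T \in \mathcal{L}(H)$, write $[T|_M] := \inf\{\|Tx\| : x \in M, \|x\|=1\}$; $T|_M$ satisfies $\mathcal{N}^*$ if there is $x_0 \in M$ with $\|x_0\|=1$ and $\|Tx_0\| = [T|_M]$. $T$ satisfies the property $\mathcal{AN}^*$ if $T|_M$ satisfies $\mathcal{N}^*$ for every closed subspace $M \neq \{0\}$ of $H$. *)

theory Defs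
  imports "HOL-Analysis.Analysis"
begin

text \<open>Complex vector spaces, complex inner product spaces and complex Hilbert
  spaces (HOL only provides the real versions), modelled after real_inner.\<close>

class complex_vector = real_vector +
  fixes scaleC :: "complex \<Rightarrow> 'a \<Rightarrow> 'a" (infixr \<open>*\<^sub>C\<close> 75)
  assumes scaleC_add_right: "a *\<^sub>C (x + y) = a *\<^sub>C x + a *\<^sub>C y"
    and scaleC_add_left: "(a + b) *\<^sub>C x = a *\<^sub>C x + b *\<^sub>C x"
    and scaleC_scaleC: "a *\<^sub>C (b *\<^sub>C x) = (a * b) *\<^sub>C x"
    and scaleC_one: "1 *\<^sub>C x = x"
    and scaleR_scaleC: "scaleR r x = complex_of_real r *\<^sub>C x"

class complex_inner = complex_vector + real_normed_vector +
  fixes cinner :: "'a \<Rightarrow> 'a \<Rightarrow> complex"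
  assumes cinner_commute: "cinner x y = cnj (cinner y x)"
    and cinner_add_left: "cinner (x + y) z = cinner x z + cinner y z"
    and cinner_scaleC_left: "cinner (r *\<^sub>C x) y = cnj r * cinner x y"
    and cinner_ge_zero: "0 \<le> Re (cinner x x)"
    and cinner_eq_zero_iff: "cinner x x = 0 \<longleftrightarrow> x = 0"
    and norm_eq_sqrt_cinner: "norm x = sqrt (Re (cinner x x))"

class chilbert_space = complex_inner + complete_space

definition clinear :: "('a::complex_vector \<Rightarrow> 'b::complex_vector) \<Rightarrow> bool" where
  "clinear T \<longleftrightarrow> (\<forall>x y. T (x + y) = T x + T y) \<and> (\<forall>c x. T (c *\<^sub>C x) = c *\<^sub>C T x)"

definition bounded_clinear :: "('a::complex_inner \<Rightarrow> 'b::complex_inner) \<Rightarrow> bool" where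
  "bounded_clinear T \<longleftrightarrow> clinear T \<and> (\<exists>K. \<forall>x. norm (T x) \<le> norm x * K)"

definition orth_proj :: "('a::complex_inner \<Rightarrow> 'a) \<Rightarrow> bool" where
  "orth_proj P \<longleftrightarrow> bounded_clinear P \<and> (\<forall>x. P (P x) = P x)
     \<and> (\<forall>x y. cinner (P x) y = cinner x (P y))"

definition csubspace :: "'a::complex_vector set \<Rightarrow> bool" where
  "csubspace M \<longleftrightarrow> 0 \<in> M \<and> (\<forall>x\<in>M. \<forall>y\<in>M. x + y \<in> M) \<and> (\<forall>c. \<forall>x\<in>M. c *\<^sub>C x \<in> M)"

definition min_modulus_on :: "('a::complex_inner \<Rightarrow> 'a) \<Rightarrow> 'a set \<Rightarrow> real" where
  "min_modulus_on T M = Inf {norm (T x) | x. x \<in> M \<and> norm x = 1}"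

definition property_N_star_on :: "('a::complex_inner \<Rightarrow> 'a) \<Rightarrow> 'a set \<Rightarrow> bool" where
  "property_N_star_on T M \<longleftrightarrow>
     (\<exists>x0\<in>M. norm x0 = 1 \<and> norm (T x0) = min_modulus_on T M)"

definition property_AN_star :: "('a::complex_inner \<Rightarrow> 'a) \<Rightarrow> bool" where
  "property_AN_star T \<longleftrightarrow>
     (\<forall>M. csubspace M \<and> closed M \<and> M \<noteq> {0} \<longrightarrow> property_N_star_on T M)"

end

theory Submission
  imports Defs
begin

sublocale complex_vector \<subseteq> cvs: vector_space scaleC
  by unfold_locales (simp_all add: complex_vector_class.scaleC_add_right complex_vector_class.scaleC_add_left complex_vector_class.scaleC_scaleC complex_vector_class.scaleC_one)


lemma cinner_add_right: "cinner (x::'a::complex_inner) (y + z) = cinner x y + cinner x z"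
  by (simp add: cinner_commute[of x] cinner_add_left)

lemma cinner_scaleC_right: "cinner x (r *\<^sub>C y) = r * cinner x y"
  by (simp add: cinner_commute[of x] cinner_scaleC_left)

lemma cinner_zero_left[simp]: "cinner 0 x = 0"
  using cinner_add_left[of 0 0 x] by simp

lemma cinner_zero_right[simp]: "cinner x 0 = 0"
  using cinner_add_right[of x 0 0] by simp

lemma minus_scaleC: "- (x::'a::complex_vector) = (-1) *\<^sub>C x"
proof -
  have "- x = scaleR (-1) x" by simp
  also have "\<dots> = complex_of_real (-1) *\<^sub>C x" by (rule scaleR_scaleC)
  finally show ?thesis by simp
qed

lemma cinner_minus_left: "cinner (- x) y = - cinner x y"
  by (subst minus_scaleC, subst cinner_scaleC_left) simp

lemma cinner_minus_right: "cinner x (- y) = - cinner x y"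
  by (subst minus_scaleC, subst cinner_scaleC_right) simp

lemma cinner_diff_left: "cinner (x - y) z = cinner x z - cinner y z"
  using cinner_add_left[of x "-y" z] by (simp add: cinner_minus_left)

lemma cinner_diff_right: "cinner x (y - z) = cinner x y - cinner x z"
  using cinner_add_right[of x y "-z"] by (simp add: cinner_minus_right)

lemma cinner_sum_left: "cinner (\<Sum>i\<in>A. f i) y = (\<Sum>i\<in>A. cinner (f i) y)"
  by (induct A rule: infinite_finite_induct) (auto simp: cinner_add_left)

lemma cinner_sum_right: "cinner y (\<Sum>i\<in>A. f i) = (\<Sum>i\<in>A. cinner y (f i))"
  by (induct A rule: infinite_finite_induct) (auto simp: cinner_add_right)

lemma cinner_self_real: "cinner x x = complex_of_real (Re (cinner x x))"
proof -
  have "Im (cinner x x) = - Im (cinner x x)" using arg_cong[OF cinner_commute[of x x], of Im] by simp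
  then have "Im (cinner x x) = 0" by simp
  then show ?thesis by (simp add: complex_eq_iff)
qed

lemma norm_sq_cinner: "(norm x)^2 = Re (cinner x x)"
  by (simp add: norm_eq_sqrt_cinner cinner_ge_zero)

lemma cinner_self_norm: "cinner x x = complex_of_real ((norm x)^2)"
  by (metis cinner_self_real norm_sq_cinner)

lemma scaleC_zero_right[simp]: "c *\<^sub>C (0::'a::complex_vector) = 0"
  using scaleC_add_right[of c 0 0] by simp

lemma scaleC_zero_left[simp]: "0 *\<^sub>C x = 0"
  using scaleC_add_left[of 0 0 x] by simp

lemma norm_scaleC: "norm (c *\<^sub>C (x::'a::complex_inner)) = cmod c * norm x"
proof -
  have "(norm (c *\<^sub>C x))^2 = Re (cinner (c *\<^sub>C x) (c *\<^sub>C x))" by (rule norm_sq_cinner)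
  also have "\<dots> = Re (cnj c * c * cinner x x)"
    by (simp add: cinner_scaleC_left cinner_scaleC_right mult.assoc mult.left_commute[of c])
  also have "cnj c * c = complex_of_real ((cmod c)^2)" by (subst complex_norm_square) (simp add: mult.commute)
  also have "Re (complex_of_real ((cmod c)^2) * cinner x x) = (cmod c)^2 * (norm x)^2"
    by (simp add: cinner_self_norm)
  also have "\<dots> = (cmod c * norm x)^2" by (simp add: power_mult_distrib)
  finally show ?thesis
    by (rule power2_eq_imp_eq) auto
qed

lemma norm_sq_add: "(norm (x + y))^2 = (norm x)^2 + (norm y)^2 + 2 * Re (cinner x y)"
proof -
  have "Re (cinner y x) = Re (cinner x y)" using arg_cong[OF cinner_commute[of y x], of Re] by simp
  then show ?thesis
    by (simp add: norm_sq_cinner cinner_add_left cinner_add_right)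
qed

lemma norm_sq_diff: "(norm (x - y))^2 = (norm x)^2 + (norm y)^2 - 2 * Re (cinner x y)"
  using norm_sq_add[of x "-y"] by (simp add: cinner_minus_right)

lemma pythagoras: "cinner x y = 0 \<Longrightarrow> (norm (x + y))^2 = (norm x)^2 + (norm y)^2"
  by (simp add: norm_sq_add)

lemma cinner_unit_bound: "norm e = 1 \<Longrightarrow> cmod (cinner e x) \<le> norm x"
proof -
  assume e: "norm e = 1"
  define c where "c = cinner e x"
  have "0 \<le> (norm (x - c *\<^sub>C e))^2" by simp
  also have "\<dots> = (norm x)^2 + (cmod c)^2 - 2 * Re (cinner x (c *\<^sub>C e))"
    by (simp add: norm_sq_diff norm_scaleC e)
  also have "cinner x (c *\<^sub>C e) = c * cnj c"
    by (simp add: cinner_scaleC_right c_def cinner_commute[of x e])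
  also have "Re (c * cnj c) = (cmod c)^2" unfolding complex_norm_square[symmetric] by simp
  finally have "(cmod c)^2 \<le> (norm x)^2" by simp
  then show ?thesis unfolding c_def by (rule power2_le_imp_le) auto
qed


lemma cinner_self_eq_0: "cinner x x = 0 \<longleftrightarrow> x = 0"
  by (rule cinner_eq_zero_iff)

lemma orthogonal_self: "(\<And>y. cinner y x = 0) \<Longrightarrow> x = 0"
  using cinner_eq_zero_iff by blast

lemma scaleC_norm_inv: "x \<noteq> 0 \<Longrightarrow> norm (complex_of_real (1 / norm x) *\<^sub>C (x::'a::complex_inner)) = 1"
  by (simp add: norm_scaleC norm_divide)

lemma clinear_0: "clinear T \<Longrightarrow> T 0 = 0"
  unfolding clinear_def using add_cancel_right_right by (metis add.right_neutral)

lemma clinear_add: "clinear T \<Longrightarrow> T (x + y) = T x + T y"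
  unfolding clinear_def by blast

lemma clinear_scaleC: "clinear T \<Longrightarrow> T (c *\<^sub>C x) = c *\<^sub>C T x"
  unfolding clinear_def by blast

lemma clinear_minus: "clinear T \<Longrightarrow> T (- x) = - T x"
  using clinear_scaleC[of T "-1" x] by (simp add: minus_scaleC[symmetric])

lemma clinear_diff: "clinear T \<Longrightarrow> T (x - y) = T x - T y"
  using clinear_add[of T x "-y"] clinear_minus[of T y] by simp

lemma clinear_sum: "clinear T \<Longrightarrow> T (\<Sum>i\<in>A. f i) = (\<Sum>i\<in>A. T (f i))"
  by (induct A rule: infinite_finite_induct) (auto simp: clinear_0 clinear_add)

lemma clinear_scaleR: "clinear T \<Longrightarrow> T (scaleR r x) = scaleR r (T x)"
  by (simp add: scaleR_scaleC clinear_scaleC)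

lemma bounded_clinear_bounded_linear:
  assumes "bounded_clinear T" shows "bounded_linear T"
proof -
  have l: "clinear T" and b: "\<exists>K. \<forall>x. norm (T x) \<le> norm x * K"
    using assms unfolding bounded_clinear_def by auto
  obtain K where K: "\<And>x. norm (T x) \<le> norm x * K" using b by blast
  show ?thesis
    by (rule bounded_linear_intro[where K=K]) (use l K clinear_add clinear_scaleR in auto)
qed

lemma bounded_clinear_continuous: "bounded_clinear T \<Longrightarrow> continuous_on S T"
  using bounded_clinear_bounded_linear linear_continuous_on by blast

lemma bounded_clinear_isCont: "bounded_clinear T \<Longrightarrow> isCont T x"
  using bounded_clinear_bounded_linear linear_continuous_at by blast

locale oproj =
  fixes P :: "'a::complex_inner \<Rightarrow> 'a"
  assumes op: "orth_proj P"
begin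

lemma bcl: "bounded_clinear P" using op unfolding orth_proj_def by auto
lemma cl: "clinear P" using bcl unfolding bounded_clinear_def by auto
lemma idem[simp]: "P (P x) = P x" using op unfolding orth_proj_def by auto
lemma adj: "cinner (P x) y = cinner x (P y)" using op unfolding orth_proj_def by auto
lemma add: "P (x + y) = P x + P y" using cl clinear_add by blast
lemma diff: "P (x - y) = P x - P y" using cl clinear_diff by blast
lemma scale: "P (c *\<^sub>C x) = c *\<^sub>C P x" using cl clinear_scaleC by blast
lemma zero[simp]: "P 0 = 0" using cl clinear_0 by blast
lemma cont: "continuous_on S P" using bcl bounded_clinear_continuous by blast
lemma isc: "isCont P x" using bcl bounded_clinear_isCont by blast

lemma orth: "cinner (P x) (y - P y) = 0"
  by (simp add: cinner_diff_right adj[symmetric])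

lemma orth': "cinner (y - P y) (P x) = 0"
  by (simp add: cinner_diff_left adj)

lemma pyth: "(norm x)^2 = (norm (P x))^2 + (norm (x - P x))^2"
  using pythagoras[OF orth[of x x]] by simp

lemma norm_le: "norm (P x) \<le> norm x"
proof -
  have "(norm (P x))^2 \<le> (norm x)^2" using pyth[of x] zero_le_power2[of "norm (x - P x)"] by linarith
  then show ?thesis by (rule power2_le_imp_le) simp
qed

lemma norm_diff_le: "norm (x - P x) \<le> norm x"
proof -
  have "(norm (x - P x))^2 \<le> (norm x)^2" using pyth[of x] zero_le_power2[of "norm (P x)"] by linarith
  then show ?thesis by (rule power2_le_imp_le) simp
qed

lemma compl: "oproj (\<lambda>x. x - P x)"
  unfolding oproj_def orth_proj_def bounded_clinear_def clinear_def
proof (intro conjI allI)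
  show "\<exists>K. \<forall>x. norm (x - P x) \<le> norm x * K" using norm_diff_le by (intro exI[of _ 1]) auto
qed (auto simp: add scale diff cinner_diff_left cinner_diff_right adj cvs.scale_right_diff_distrib)

lemma ker_range: assumes "P x = 0" "P y = y" shows "cinner x y = 0"
proof -
  have "cinner (P x) y = cinner x (P y)" by (rule adj)
  then show ?thesis using assms by simp
qed

end

definition orthonormal :: "'a::complex_inner set \<Rightarrow> bool" where
  "orthonormal E \<longleftrightarrow> (\<forall>e\<in>E. norm e = 1) \<and> (\<forall>e\<in>E. \<forall>f\<in>E. e \<noteq> f \<longrightarrow> cinner e f = 0)"

definition onbp :: "'a::complex_inner set \<Rightarrow> 'a \<Rightarrow> 'a" where
  "onbp E x = (\<Sum>e\<in>E. cinner e x *\<^sub>C e)"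

lemma orthonormal_cinner: "orthonormal E \<Longrightarrow> e \<in> E \<Longrightarrow> f \<in> E \<Longrightarrow> cinner e f = (if e = f then 1 else 0)"
  unfolding orthonormal_def using cinner_self_norm[of e] by auto

lemma onbp_cinner:
  assumes "finite E" "orthonormal E" "f \<in> E"
  shows "cinner f (onbp E x) = cinner f x"
proof -
  have "cinner f (onbp E x) = (\<Sum>e\<in>E. cinner e x * cinner f e)"
    unfolding onbp_def by (simp add: cinner_sum_right cinner_scaleC_right)
  also have "\<dots> = (\<Sum>e\<in>E. if e = f then cinner f x else 0)"
    by (rule sum.cong) (use assms orthonormal_cinner[of E f] in auto)
  also have "\<dots> = cinner f x" using assms by simp
  finally show ?thesis .
qed

lemma onbp_adj:
  assumes "finite E" "orthonormal E"
  shows "cinner (onbp E x) y = cinner x (onbp E y)"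
  unfolding onbp_def
  by (simp add: cinner_sum_left cinner_sum_right cinner_scaleC_left cinner_scaleC_right
      cinner_commute[of x] mult.commute)

lemma onbp_clinear: "clinear (onbp E)"
  unfolding clinear_def onbp_def
  by (simp add: cinner_add_right cinner_scaleC_right scaleC_add_left sum.distrib cvs.scale_sum_right
      scaleC_scaleC)

lemma onbp_idem:
  assumes "finite E" "orthonormal E"
  shows "onbp E (onbp E x) = onbp E x"
  unfolding onbp_def[of E "onbp E x"] using onbp_cinner[OF assms] by (simp add: onbp_def)

lemma onbp_fix: "finite E \<Longrightarrow> orthonormal E \<Longrightarrow> e \<in> E \<Longrightarrow> onbp E e = e"
proof -
  assume a: "finite E" "orthonormal E" "e \<in> E"
  have "onbp E e = (\<Sum>f\<in>E. if f = e then e else 0)"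
    unfolding onbp_def by (rule sum.cong) (use a orthonormal_cinner[of E] in auto)
  then show ?thesis using a by simp
qed

lemma onbp_oproj:
  assumes "finite E" "orthonormal E"
  shows "oproj (onbp E)"
proof -
  have b: "norm (onbp E x) \<le> norm x * (\<Sum>e\<in>E. 1)" for x
  proof -
    have "norm (onbp E x) \<le> (\<Sum>e\<in>E. norm (cinner e x *\<^sub>C e))"
      unfolding onbp_def by (rule norm_sum)
    also have "\<dots> \<le> (\<Sum>e\<in>E. norm x)"
      by (rule sum_mono) (use assms cinner_unit_bound in \<open>auto simp: norm_scaleC orthonormal_def\<close>)
    finally show ?thesis by (simp add: mult.commute)
  qed
  show ?thesis unfolding oproj_def orth_proj_def bounded_clinear_def
    using onbp_clinear b onbp_idem[OF assms] onbp_adj[OF assms] by blast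
qed

subclass (in chilbert_space) banach ..

lemma cauchy_schwarz: "cmod (cinner w x) \<le> norm w * norm x"
proof (cases "w = 0")
  case True then show ?thesis by simp
next
  case False
  define u where "u = complex_of_real (1 / norm w) *\<^sub>C w"
  have u: "norm u = 1" using False by (simp add: u_def norm_scaleC norm_divide)
  have w: "w = complex_of_real (norm w) *\<^sub>C u" using False by (simp add: u_def scaleC_scaleC)
  have "cinner w x = norm w * cinner u x"
    by (subst w, subst cinner_scaleC_left) simp
  then have "cmod (cinner w x) = norm w * cmod (cinner u x)" by (simp add: norm_mult)
  also have "\<dots> \<le> norm w * norm x" using cinner_unit_bound[OF u] by (simp add: mult_left_mono)
  finally show ?thesis .
qed

lemma bounded_linear_cinner_right: "bounded_linear (\<lambda>y. cinner w y)"
  by (rule bounded_linear_intro[where K="norm w"])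
     (auto simp: cinner_add_right scaleR_scaleC cinner_scaleC_right scaleR_conv_of_real,
      metis cauchy_schwarz mult.commute)

lemma bounded_linear_scaleC: "bounded_linear (\<lambda>y::'a::complex_inner. c *\<^sub>C y)"
  by (rule bounded_linear_intro[where K="cmod c"])
     (auto simp: scaleC_add_right scaleR_scaleC scaleC_scaleC norm_scaleC mult.commute)

lemma continuous_cinner_right: "continuous_on S (\<lambda>y. cinner w y)"
  using bounded_linear_cinner_right linear_continuous_on by blast

lemma clinear_id: "clinear (\<lambda>x. x)" unfolding clinear_def by simp
lemma clinear_comp: "clinear S \<Longrightarrow> clinear T \<Longrightarrow> clinear (\<lambda>x. S (T x))"
  unfolding clinear_def by simp
lemma clinear_sub: "clinear S \<Longrightarrow> clinear T \<Longrightarrow> clinear (\<lambda>x. S x - T x)"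
  unfolding clinear_def by (simp add: cvs.scale_right_diff_distrib)
lemma clinear_plus: "clinear S \<Longrightarrow> clinear T \<Longrightarrow> clinear (\<lambda>x. S x + T x)"
  unfolding clinear_def by (simp add: scaleC_add_right)
lemma clinear_scal: "clinear S \<Longrightarrow> clinear (\<lambda>x. a *\<^sub>C S x)"
  unfolding clinear_def by (simp add: scaleC_add_right scaleC_scaleC mult.commute)

lemma csubspace_kernel: "clinear A \<Longrightarrow> csubspace {y. A y = 0}"
  unfolding csubspace_def by (auto simp: clinear_0 clinear_add clinear_scaleC)

lemma csubspace_orth: "csubspace {y. cinner w y = 0}"
  unfolding csubspace_def by (auto simp: cinner_add_right cinner_scaleC_right)

lemma csubspace_Int: "csubspace A \<Longrightarrow> csubspace B \<Longrightarrow> csubspace (A \<inter> B)"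
  unfolding csubspace_def by auto

lemma csubspace_INT: "(\<And>i. i \<in> I \<Longrightarrow> csubspace (A i)) \<Longrightarrow> csubspace (\<Inter>i\<in>I. A i)"
  unfolding csubspace_def by auto

lemma csubspace_0: "csubspace V \<Longrightarrow> 0 \<in> V" unfolding csubspace_def by auto
lemma csubspace_add: "csubspace V \<Longrightarrow> x \<in> V \<Longrightarrow> y \<in> V \<Longrightarrow> x + y \<in> V" unfolding csubspace_def by auto
lemma csubspace_scaleC: "csubspace V \<Longrightarrow> x \<in> V \<Longrightarrow> c *\<^sub>C x \<in> V" unfolding csubspace_def by auto
lemma csubspace_minus: "csubspace V \<Longrightarrow> x \<in> V \<Longrightarrow> - x \<in> V"
  using csubspace_scaleC[of V x "-1"] by (simp add: minus_scaleC[symmetric])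
lemma csubspace_diff: "csubspace V \<Longrightarrow> x \<in> V \<Longrightarrow> y \<in> V \<Longrightarrow> x - y \<in> V"
  using csubspace_add[of V x "-y"] csubspace_minus[of V y] by simp
lemma csubspace_sum: "csubspace V \<Longrightarrow> (\<And>i. i \<in> A \<Longrightarrow> f i \<in> V) \<Longrightarrow> (\<Sum>i\<in>A. f i) \<in> V"
  by (induct A rule: infinite_finite_induct) (auto intro: csubspace_0 csubspace_add)

lemma onbp_in: "csubspace V \<Longrightarrow> S \<subseteq> V \<Longrightarrow> onbp S x \<in> V"
  unfolding onbp_def by (rule csubspace_sum) (auto intro: csubspace_scaleC)

lemma orthonormal_insert:
  assumes "orthonormal S" "norm u = 1" "\<forall>e\<in>S. cinner e u = 0"
  shows "orthonormal (insert u S)"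
proof -
  have "cinner u e = 0" if "e \<in> S" for e using assms(3) that cinner_commute[of u e] by simp
  then show ?thesis using assms unfolding orthonormal_def by auto
qed

lemma ext_orth:
  assumes V: "csubspace V" and S: "finite S" "S \<subseteq> V" "orthonormal S" and v: "v \<in> V" "onbp S v \<noteq> v"
  shows "\<exists>u\<in>V. norm u = 1 \<and> (\<forall>e\<in>S. cinner e u = 0)"
proof -
  define w where "w = v - onbp S v"
  have wV: "w \<in> V" unfolding w_def by (intro csubspace_diff V v onbp_in S)
  have w0: "w \<noteq> 0" using v unfolding w_def by simp
  have wo: "cinner e w = 0" if "e \<in> S" for e
    unfolding w_def using onbp_cinner[OF S(1) S(3) that] by (simp add: cinner_diff_right)
  define u where "u = complex_of_real (1 / norm w) *\<^sub>C w"
  show ?thesis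
    by (rule bexI[of _ u]) (use w0 wo wV V in \<open>auto simp: u_def norm_scaleC norm_divide cinner_scaleC_right csubspace_scaleC\<close>)
qed

primrec Lseq :: "('a set \<Rightarrow> 'a) \<Rightarrow> nat \<Rightarrow> 'a set" where
  "Lseq g 0 = {}"
| "Lseq g (Suc n) = insert (g (Lseq g n)) (Lseq g n)"

lemma Lseq_image: "Lseq g n = (\<lambda>k. g (Lseq g k)) ` {..<n}"
  by (induct n) (auto simp: lessThan_Suc)

definition onseq :: "(nat \<Rightarrow> 'a::complex_inner) \<Rightarrow> 'a set \<Rightarrow> bool" where
  "onseq e V \<longleftrightarrow> (\<forall>n. e n \<in> V \<and> norm (e n) = 1) \<and> (\<forall>m n. m \<noteq> n \<longrightarrow> cinner (e m) (e n) = 0)"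

lemma dichotomy:
  assumes V: "csubspace V"
  shows "(\<exists>e. onseq e V) \<or> (\<exists>S. finite S \<and> S \<subseteq> V \<and> orthonormal S \<and> (\<forall>v\<in>V. onbp S v = v))"
proof (rule ccontr)
  assume na: "\<not> ?thesis"
  then have na1: "\<not> (\<exists>e. onseq e V)"
    and na2: "\<And>S. finite S \<Longrightarrow> S \<subseteq> V \<Longrightarrow> orthonormal S \<Longrightarrow> \<exists>v\<in>V. onbp S v \<noteq> v"
    by auto
  have ex: "\<exists>u\<in>V. norm u = 1 \<and> (\<forall>e\<in>S. cinner e u = 0)"
    if a: "finite S" "S \<subseteq> V" "orthonormal S" for S
  proof -
    obtain v where "v \<in> V" "onbp S v \<noteq> v" using na2[OF a] by blast
    then show ?thesis using ext_orth[OF V a] by blast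
  qed
  define g where "g S = (SOME u. u \<in> V \<and> norm u = 1 \<and> (\<forall>e\<in>S. cinner e u = 0))" for S
  have g: "g S \<in> V \<and> norm (g S) = 1 \<and> (\<forall>e\<in>S. cinner e (g S) = 0)"
    if "finite S" "S \<subseteq> V" "orthonormal S" for S
    unfolding g_def by (rule someI_ex) (use ex[OF that] in blast)
  have inv: "finite (Lseq g n) \<and> Lseq g n \<subseteq> V \<and> orthonormal (Lseq g n)" for n
  proof (induct n)
    case 0 then show ?case by (simp add: orthonormal_def)
  next
    case (Suc n)
    then have a: "finite (Lseq g n)" "Lseq g n \<subseteq> V" "orthonormal (Lseq g n)" by auto
    note b = g[OF a]
    have "orthonormal (Lseq g (Suc n))"
      using orthonormal_insert[OF a(3)] b by simp
    then show ?case using a b by simp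
  qed
  define e where "e n = g (Lseq g n)" for n
  have e1: "e n \<in> V \<and> norm (e n) = 1" for n using g[of "Lseq g n"] inv[of n] by (simp add: e_def)
  have e2: "cinner (e m) (e n) = 0" if "m < n" for m n
  proof -
    have h: "Lseq g n = (\<lambda>k. g (Lseq g k)) ` {..<n}" by (rule Lseq_image)
    have "g (Lseq g m) \<in> (\<lambda>k. g (Lseq g k)) ` {..<n}" using that by blast
    then have "e m \<in> Lseq g n" unfolding e_def h .
    then show ?thesis using g[of "Lseq g n"] inv[of n] by (simp add: e_def)
  qed
  have "onseq e V"
    unfolding onseq_def
  proof (intro conjI allI impI)
    fix m n :: nat assume "m \<noteq> n"
    show "cinner (e m) (e n) = 0"
    proof (cases "m < n")
      case True then show ?thesis by (rule e2)
    next
      case False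
      then have "n < m" using \<open>m \<noteq> n\<close> by simp
      then have "cinner (e n) (e m) = 0" by (rule e2)
      then show ?thesis by (subst cinner_commute) simp
    qed
  qed (use e1 in auto)
  then show False using na1 by blast
qed


subsection \<open>Projections with both range and kernel infinite-dimensional fail AN*\<close>

lemma min_modulus_nonneg:
  assumes "x \<in> M" "norm x = 1"
  shows "0 \<le> min_modulus_on T M"
  unfolding min_modulus_on_def
  by (rule cInf_greatest) (use assms in auto)

lemma min_modulus_le:
  assumes "x \<in> M" "norm x = 1"
  shows "min_modulus_on T M \<le> norm (T x)"
  unfolding min_modulus_on_def
  by (rule cInf_lower) (use assms in \<open>auto intro: bdd_belowI[of _ 0]\<close>)

lemma not_both_infinite:
  fixes P :: "'a::chilbert_space \<Rightarrow> 'a"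
  assumes op: "oproj P" and an: "property_AN_star P"
    and e: "onseq e {x. P x = x}" and f: "onseq f {x. P x = 0}"
  shows False
proof -
  interpret pp: oproj P by (rule op)
  have e1: "P (e n) = e n" "norm (e n) = 1" for n using e unfolding onseq_def by auto
  have f1: "P (f n) = 0" "norm (f n) = 1" for n using f unfolding onseq_def by auto
  have ff: "cinner (f m) (f n) = (if m = n then 1 else 0)" for m n
    using f unfolding onseq_def by (auto simp: cinner_self_norm)
  have ee: "cinner (e m) (e n) = (if m = n then 1 else 0)" for m n
    using e unfolding onseq_def by (auto simp: cinner_self_norm)
  define c :: "nat \<Rightarrow> real" where "c n = (1/2)^n" for n
  have c0: "0 \<le> c n" for n by (simp add: c_def)
  have csum: "summable c" unfolding c_def by (rule summable_geometric) simp
  have csum2: "suminf c = 2" unfolding c_def using suminf_geometric[of "1/2::real"] by simp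
  define t where "t z n = (complex_of_real (c n) * cinner (f n) z) *\<^sub>C e n" for z n
  have tn: "norm (t z n) \<le> c n * norm z" for z n
  proof -
    have "norm (t z n) = c n * cmod (cinner (f n) z)"
      by (simp add: t_def norm_scaleC e1 norm_mult c0)
    also have "\<dots> \<le> c n * norm z" by (rule mult_left_mono) (use cinner_unit_bound[OF f1(2)] c0 in auto)
    finally show ?thesis .
  qed
  have csumz: "summable (\<lambda>n. c n * norm z)" for z by (rule summable_mult2) (rule csum)
  have tsum: "summable (t z)" for z
    by (rule summable_comparison_test[OF _ csumz]) (use tn in auto)
  define J where "J z = suminf (t z)" for z
  have Jadd: "J (x + y) = J x + J y" for x y
  proof -
    have "t (x + y) = (\<lambda>n. t x n + t y n)"
      by (auto simp: t_def cinner_add_right distrib_left scaleC_add_left)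
    then show ?thesis unfolding J_def using suminf_add[OF tsum tsum] by simp
  qed
  have Jscale: "J (a *\<^sub>C x) = a *\<^sub>C J x" for a x
  proof -
    have "t (a *\<^sub>C x) = (\<lambda>n. a *\<^sub>C t x n)"
      by (auto simp: t_def cinner_scaleC_right scaleC_scaleC mult_ac)
    then show ?thesis unfolding J_def
      using bounded_linear.suminf[OF bounded_linear_scaleC tsum] by simp
  qed
  have Jbound: "norm (J z) \<le> norm z * 2" for z
  proof -
    have "norm (J z) \<le> suminf (\<lambda>n. c n * norm z)"
      unfolding J_def by (rule norm_suminf_le[OF tn csumz])
    also have "\<dots> = 2 * norm z" using suminf_mult2[OF csum, of "norm z"] csum2 by simp
    finally show ?thesis by simp
  qed
  have Jbl: "bounded_linear J"
    by (rule bounded_linear_intro[where K=2]) (use Jadd Jscale Jbound in \<open>auto simp: scaleR_scaleC\<close>)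
  have Jcl: "clinear J" unfolding clinear_def using Jadd Jscale by auto
  have Jcoord: "cinner (e k) (J z) = complex_of_real (c k) * cinner (f k) z" for k z
  proof -
    have "cinner (e k) (J z) = (\<Sum>n. cinner (e k) (t z n))"
      unfolding J_def using bounded_linear.suminf[OF bounded_linear_cinner_right tsum] by simp
    also have "(\<lambda>n. cinner (e k) (t z n)) = (\<lambda>n. if n = k then complex_of_real (c k) * cinner (f k) z else 0)"
      by (auto simp: t_def cinner_scaleC_right ee)
    also have "(\<Sum>n. (if n = k then complex_of_real (c k) * cinner (f k) z else 0)) = complex_of_real (c k) * cinner (f k) z"
      using sums_single[of k "\<lambda>_. complex_of_real (c k) * cinner (f k) z"] by (simp add: sums_iff)
    finally show ?thesis .
  qed
  have Jf: "J (f k) = complex_of_real (c k) *\<^sub>C e k" for k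
  proof -
    have "t (f k) = (\<lambda>n. if n = k then complex_of_real (c k) *\<^sub>C e k else 0)"
      by (auto simp: t_def ff)
    then show ?thesis unfolding J_def
      using sums_single[of k "\<lambda>_. complex_of_real (c k) *\<^sub>C e k"] by (simp add: sums_iff)
  qed
  define W where "W = {w. P w = 0 \<and> (\<forall>n. cinner (f n) w = 0)}"
  define M where "M = {y. P y - J (y - P y) = 0} \<inter> (\<Inter>w\<in>W. {y. cinner w y = 0})"
  have Mcl: "closed M"
  proof -
    have "continuous_on UNIV (\<lambda>y. P y - J (y - P y))"
      by (intro continuous_intros pp.cont linear_continuous_on[OF Jbl, THEN continuous_on_compose2]) auto
    from continuous_closed_preimage_constant[OF this closed_UNIV, of 0]
    have "closed {y. P y - J (y - P y) = 0}" by simp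
    moreover have "closed {y. cinner w y = 0}" for w
      using continuous_closed_preimage_constant[OF continuous_cinner_right closed_UNIV, of w 0] by simp
    ultimately show ?thesis unfolding M_def by (intro closed_Int closed_INT) auto
  qed
  have "clinear (\<lambda>y. P y - J (y - P y))"
    by (intro clinear_sub pp.cl clinear_comp[OF Jcl] clinear_id)
  then have Msub: "csubspace M"
    unfolding M_def by (intro csubspace_Int csubspace_INT csubspace_kernel csubspace_orth)
  define g where "g k = complex_of_real (c k) *\<^sub>C e k + f k" for k
  have Pg: "P (g k) = complex_of_real (c k) *\<^sub>C e k" for k
    unfolding g_def pp.add pp.scale e1 f1 by simp
  have gdiff: "g k - P (g k) = f k" for k unfolding Pg by (simp add: g_def)
  have gM: "g k \<in> M" for k
  proof -
    from gdiff[of k] have 1: "P (g k) - J (g k - P (g k)) = 0" unfolding Pg by (simp add: Jf)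
    have 2: "cinner w (g k) = 0" if "w \<in> W" for w
    proof -
      have "P w = 0" "cinner (f k) w = 0" using that by (auto simp: W_def)
      then have "cinner w (e k) = 0" "cinner w (f k) = 0"
        using pp.ker_range[of w "e k"] e1 cinner_commute[of w "f k"] by auto
      then show ?thesis by (simp add: g_def cinner_add_right cinner_scaleC_right)
    qed
    show ?thesis unfolding M_def using 1 2 by auto
  qed
  have gn: "1 \<le> norm (g k)" for k
  proof -
    have "norm (g k - P (g k)) \<le> norm (g k)" by (rule pp.norm_diff_le)
    then show ?thesis unfolding gdiff f1 .
  qed
  define u where "u k = complex_of_real (1 / norm (g k)) *\<^sub>C g k" for k
  have g0: "g k \<noteq> 0" for k using gn[of k] by auto
  have uM: "u k \<in> M" "norm (u k) = 1" for k
    using gM g0 csubspace_scaleC[OF Msub] by (auto simp: u_def norm_scaleC norm_divide)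
  have Pu: "norm (P (u k)) \<le> c k" for k
  proof -
    have "norm (P (u k)) = norm (P (g k)) / norm (g k)"
      by (simp add: u_def pp.scale norm_scaleC norm_divide)
    also have "\<dots> \<le> norm (P (g k))" using divide_left_mono[of 1 "norm (g k)" "norm (P (g k))"] gn[of k] g0[of k] by simp
    also have "\<dots> = c k" by (simp add: Pg norm_scaleC e1 c0)
    finally show ?thesis .
  qed
  have Mne: "M \<noteq> {0}" using uM(1)[of 0] uM(2)[of 0] by auto
  have mm0: "min_modulus_on P M = 0"
  proof -
    have le: "min_modulus_on P M \<le> c k" for k
      using min_modulus_le[OF uM(1)[of k] uM(2)[of k], of P] Pu[of k] by simp
    have "min_modulus_on P M \<le> 0"
    proof (rule ccontr)
      assume "\<not> min_modulus_on P M \<le> 0"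
      then have pos: "0 < min_modulus_on P M" by simp
      obtain k where "(1/2::real)^k < min_modulus_on P M"
        using real_arch_pow_inv[OF pos, of "1/2"] by auto
      then show False using le[of k] by (simp add: c_def)
    qed
    then show ?thesis using min_modulus_nonneg[OF uM(1)[of 0] uM(2)[of 0], of P] by simp
  qed
  obtain x0 where x0: "x0 \<in> M" "norm x0 = 1" "norm (P x0) = min_modulus_on P M"
    using an Mne Mcl Msub unfolding property_AN_star_def property_N_star_on_def by blast
  have Px0: "P x0 = 0" using x0(3) mm0 by simp
  have "J x0 = 0" using x0(1) Px0 unfolding M_def by simp
  then have fx0: "cinner (f k) x0 = 0" for k
    using Jcoord[of k x0] by (simp add: c_def)
  have "x0 \<in> W" using Px0 fx0 by (simp add: W_def)
  then have "cinner x0 x0 = 0" using x0(1) unfolding M_def by blast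
  then show False using x0(2) by (simp add: cinner_self_norm)
qed


lemma (in oproj) csub_range: "csubspace {x. P x = x}"
  unfolding csubspace_def by (auto simp: add scale)

lemma (in oproj) csub_ker: "csubspace {x. P x = 0}"
  unfolding csubspace_def by (auto simp: add scale)

lemma fin_or_cofin:
  fixes P :: "'a::chilbert_space \<Rightarrow> 'a"
  assumes op: "oproj P" and an: "property_AN_star P"
  shows "(\<exists>S. finite S \<and> orthonormal S \<and> (\<forall>x. P x = onbp S x))
       \<or> (\<exists>S. finite S \<and> orthonormal S \<and> (\<forall>x. P x = x - onbp S x))"
proof -
  interpret pp: oproj P by (rule op)
  show ?thesis
  proof (cases "\<exists>e. onseq e {x. P x = x}")
    case True
    then obtain e where e: "onseq e {x. P x = x}" by blast
    show ?thesis
    proof (cases "\<exists>f. onseq f {x. P x = 0}")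
      case True
      then obtain f where "onseq f {x. P x = 0}" by blast
      then show ?thesis using not_both_infinite[OF op an e] by blast
    next
      case False
      then obtain S where S: "finite S" "S \<subseteq> {x. P x = 0}" "orthonormal S"
        "\<forall>v\<in>{x. P x = 0}. onbp S v = v" using dichotomy[OF pp.csub_ker] by blast
      have "P x = x - onbp S x" for x
      proof -
        have "P (x - P x) = 0" by (simp add: pp.diff)
        then have 1: "onbp S (x - P x) = x - P x" using S(4) by blast
        have "cinner e (x - P x) = cinner e x" if "e \<in> S" for e
          using S(2) that pp.adj[of e x] by (auto simp: cinner_diff_right)
        then have "onbp S (x - P x) = onbp S x" unfolding onbp_def by simp
        then have eq: "x - P x = onbp S x" using 1 by simp
        show ?thesis unfolding eq[symmetric] by simp
      qed
      then show ?thesis using S by blast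
    qed
  next
    case False
    then obtain S where S: "finite S" "S \<subseteq> {x. P x = x}" "orthonormal S"
      "\<forall>v\<in>{x. P x = x}. onbp S v = v" using dichotomy[OF pp.csub_range] by blast
    have "P x = onbp S x" for x
    proof -
      have 1: "onbp S (P x) = P x" using S(4) by simp
      have "cinner e (P x) = cinner e x" if "e \<in> S" for e
        using S(2) that pp.adj[of e x] by auto
      then have "onbp S (P x) = onbp S x" unfolding onbp_def by simp
      then show ?thesis using 1 by simp
    qed
    then show ?thesis using S by blast
  qed
qed

lemma gram_schmidt:
  fixes B :: "'a::complex_inner set"
  assumes "finite B"
  shows "\<exists>F. finite F \<and> orthonormal F \<and> (\<forall>b\<in>B. onbp F b = b)"
  using assms
proof (induct B rule: finite_induct)
  case empty then show ?case by (intro exI[of _ "{}"]) (simp add: orthonormal_def)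
next
  case (insert b B)
  then obtain F where F: "finite F" "orthonormal F" "\<forall>b\<in>B. onbp F b = b" by blast
  show ?case
  proof (cases "onbp F b = b")
    case True then show ?thesis using F by auto
  next
    case False
    define w where "w = b - onbp F b"
    have w0: "w \<noteq> 0" using False by (simp add: w_def)
    define u where "u = complex_of_real (1 / norm w) *\<^sub>C w"
    have nu: "norm u = 1" using w0 by (simp add: u_def norm_scaleC norm_divide)
    have wo: "cinner e w = 0" if "e \<in> F" for e
      unfolding w_def using onbp_cinner[OF F(1) F(2) that] by (simp add: cinner_diff_right)
    have uo: "\<forall>e\<in>F. cinner e u = 0" using wo by (simp add: u_def cinner_scaleC_right)
    have uF: "u \<notin> F"
    proof
      assume "u \<in> F" then have "cinner u u = 0" using uo by blast
      then show False using nu by (simp add: cinner_self_norm)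
    qed
    have on: "orthonormal (insert u F)" by (rule orthonormal_insert[OF F(2) nu uo])
    have split: "onbp (insert u F) x = cinner u x *\<^sub>C u + onbp F x" for x
      unfolding onbp_def using F(1) uF by simp
    have Fu: "onbp F u = 0" unfolding onbp_def using uo by simp
    have ub: "cinner u (onbp F y) = 0" for y
      using onbp_adj[OF F(1) F(2), of u y] Fu by simp
    have "onbp (insert u F) b = b"
    proof -
      have "cinner u b = cinner u w + cinner u (onbp F b)" by (simp add: w_def cinner_diff_right)
      also have "cinner u w = complex_of_real (norm w)"
        using w0 by (simp add: u_def cinner_scaleC_left cinner_self_norm power2_eq_square)
      finally have "cinner u b = complex_of_real (norm w)" using ub by simp
      then have "cinner u b *\<^sub>C u = w" using w0 by (simp add: u_def scaleC_scaleC)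
      then show ?thesis by (simp add: split w_def)
    qed
    moreover have "onbp (insert u F) b' = b'" if "b' \<in> B" for b'
    proof -
      have "cinner u b' = 0" using ub[of b'] F(3) that by simp
      then show ?thesis using F(3) that by (simp add: split)
    qed
    ultimately show ?thesis using F(1) on by (intro exI[of _ "insert u F"]) auto
  qed
qed

definition good :: "('a::complex_inner \<Rightarrow> 'a) \<Rightarrow> ('a \<Rightarrow> 'a) \<Rightarrow> complex \<Rightarrow> bool" where
  "good Q A a \<longleftrightarrow> (\<forall>z. Q z = 0 \<longrightarrow> A z = a *\<^sub>C z) \<and> (\<forall>y. Q y = y \<longrightarrow> Q (A y) = A y)"

lemma good_plus: "clinear Q \<Longrightarrow> good Q A a \<Longrightarrow> good Q B b \<Longrightarrow> good Q (\<lambda>x. A x + B x) (a + b)"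
  unfolding good_def by (simp add: clinear_add scaleC_add_left)

lemma good_minus: "clinear Q \<Longrightarrow> good Q A a \<Longrightarrow> good Q B b \<Longrightarrow> good Q (\<lambda>x. A x - B x) (a - b)"
  unfolding good_def by (simp add: clinear_diff cvs.scale_left_diff_distrib)

lemma good_comp: "clinear Q \<Longrightarrow> clinear A \<Longrightarrow> good Q A a \<Longrightarrow> good Q B b \<Longrightarrow> good Q (A \<circ> B) (a * b)"
  unfolding good_def by (simp add: clinear_scaleC scaleC_scaleC mult.commute)

lemma parallelogram: "(norm ((a::'a::complex_inner) + b))^2 + (norm (a - b))^2 = 2 * (norm a)^2 + 2 * (norm b)^2"
  by (simp add: norm_sq_add norm_sq_diff)

lemma proj_thm:
  fixes N :: "'a::chilbert_space set"
  assumes N: "csubspace N" "closed N"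
  shows "\<exists>n\<in>N. \<forall>m\<in>N. cinner m (v - n) = 0"
proof -
  define D where "D = (\<lambda>m. norm (v - m)) ` N"
  define d where "d = Inf D"
  have N0: "0 \<in> N" using N(1) by (rule csubspace_0)
  have Dne: "D \<noteq> {}" using N0 by (auto simp: D_def)
  have bdd: "bdd_below D" unfolding D_def by (rule bdd_belowI[of _ 0]) auto
  have dle: "d \<le> norm (v - m)" if "m \<in> N" for m
    unfolding d_def by (rule cInf_lower) (use that bdd in \<open>auto simp: D_def\<close>)
  have d0: "0 \<le> d" unfolding d_def by (rule cInf_greatest[OF Dne]) (auto simp: D_def)
  define eps where "eps k = inverse (real (Suc k))" for k
  have eps0: "0 < eps k" for k by (simp add: eps_def)
  have ex: "\<exists>m. m \<in> N \<and> (norm (v - m))^2 < d^2 + eps k" for k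
  proof -
    have "d < sqrt (d^2 + eps k)"
      using d0 eps0[of k] by (metis abs_of_nonneg less_add_same_cancel1 real_sqrt_abs real_sqrt_less_iff power2_eq_square)
    then obtain x where x: "x \<in> D" "x < sqrt (d^2 + eps k)"
      using cInf_lessD[OF Dne] unfolding d_def by blast
    then obtain m where m: "m \<in> N" "x = norm (v - m)" by (auto simp: D_def)
    have "x^2 < (sqrt (d^2 + eps k))^2"
      by (rule power_strict_mono) (use x m in auto)
    also have "\<dots> = d^2 + eps k" using eps0[of k] by simp
    finally show ?thesis using m by blast
  qed
  then have "\<forall>k. \<exists>m. m \<in> N \<and> (norm (v - m))^2 < d^2 + eps k" by blast
  then obtain m where m: "\<And>k. m k \<in> N" "\<And>k. (norm (v - m k))^2 < d^2 + eps k"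
    using choice[of "\<lambda>k m. m \<in> N \<and> (norm (v - m))^2 < d^2 + eps k"] by blast
  have par: "(norm (m j - m k))^2 \<le> 2 * eps j + 2 * eps k" for j k
  proof -
    define mid where "mid = (1/2::real) *\<^sub>R (m j + m k)"
    have midN: "mid \<in> N"
      unfolding mid_def scaleR_scaleC by (intro csubspace_scaleC N(1) csubspace_add m)
    have "(v - m j) + (v - m k) = 2 *\<^sub>R (v - mid)"
      by (simp add: mid_def algebra_simps scaleR_2)
    then have s: "norm ((v - m j) + (v - m k)) = 2 * norm (v - mid)" by simp
    have "2 * d \<le> norm ((v - m j) + (v - m k))" using dle[OF midN] s by simp
    then have s2: "(2 * d)^2 \<le> (norm ((v - m j) + (v - m k)))^2"
      by (rule power_mono) (use d0 in simp)
    have "(v - m j) - (v - m k) = m k - m j" by simp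
    then have "(norm (m k - m j))^2 = 2 * (norm (v - m j))^2 + 2 * (norm (v - m k))^2
        - (norm ((v - m j) + (v - m k)))^2"
      using parallelogram[of "v - m j" "v - m k"] by simp
    also have "\<dots> \<le> 2 * (d^2 + eps j) + 2 * (d^2 + eps k) - (2 * d)^2"
      using m(2)[of j] m(2)[of k] s2 by argo
    also have "\<dots> = 2 * eps j + 2 * eps k" by (simp add: power2_eq_square algebra_simps)
    finally show ?thesis by (simp add: norm_minus_commute)
  qed
  have "Cauchy m"
  proof (rule CauchyI)
    fix e :: real assume e: "0 < e"
    then have "0 < e^2 / 4" by simp
    then obtain K where K: "inverse (real (Suc K)) < e^2 / 4"
      using reals_Archimedean by blast
    show "\<exists>M. \<forall>p\<ge>M. \<forall>q\<ge>M. norm (m p - m q) < e"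
    proof (intro exI allI impI)
      fix p q assume pq: "K \<le> p" "K \<le> q"
      have "eps p \<le> eps K" "eps q \<le> eps K" using pq by (auto simp: eps_def field_simps)
      then have "(norm (m p - m q))^2 < e^2"
        using par[of p q] K unfolding eps_def by linarith
      then show "norm (m p - m q) < e"
        by (rule power_less_imp_less_base) (use e in simp)
    qed
  qed
  then obtain n where n: "m \<longlonglongrightarrow> n" using Cauchy_convergent convergent_def by blast
  have nN: "n \<in> N" by (rule closed_sequentially[OF N(2) m(1) n])
  have "(norm (v - n))^2 \<le> d^2"
  proof (rule LIMSEQ_le)
    show "(\<lambda>k. (norm (v - m k))^2) \<longlonglongrightarrow> (norm (v - n))^2"
      by (intro tendsto_intros n)
    show "(\<lambda>k. d^2 + eps k) \<longlonglongrightarrow> d^2"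
      using tendsto_add[OF tendsto_const LIMSEQ_inverse_real_of_nat, of "d^2"] by (simp add: eps_def)
    show "\<exists>N. \<forall>k\<ge>N. (norm (v - m k))^2 \<le> d^2 + eps k" using m(2) less_imp_le by blast
  qed
  then have nmin: "norm (v - n) \<le> norm (v - m')" if "m' \<in> N" for m'
    using dle[OF that] d0 by (metis order.trans power2_le_imp_le norm_ge_zero)
  define z where "z = v - n"
  have "cinner m' z = 0" if mN: "m' \<in> N" for m'
  proof (rule ccontr)
    define a where "a = cinner m' z"
    assume "cinner m' z \<noteq> 0"
    then have a0: "a \<noteq> 0" by (simp add: a_def)
    define r where "r = (norm m')^2"
    define s where "s = 1 / (r + 1)"
    have r0: "0 \<le> r" by (simp add: r_def)
    have s0: "0 < s" using r0 by (simp add: s_def)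
    define w where "w = (complex_of_real s * a) *\<^sub>C m'"
    have "n + w \<in> N" unfolding w_def by (intro csubspace_add N(1) nN csubspace_scaleC mN)
    then have "norm z \<le> norm (z - w)" using nmin[of "n + w"] by (simp add: z_def algebra_simps)
    then have "(norm z)^2 \<le> (norm (z - w))^2" by (rule power_mono) simp
    also have "(norm (z - w))^2 = (norm z)^2 + (norm w)^2 - 2 * Re (cinner z w)" by (rule norm_sq_diff)
    also have "cinner z w = complex_of_real s * (a * cnj a)"
      by (simp add: w_def cinner_scaleC_right a_def cinner_commute[of z m'] mult.assoc)
    also have "a * cnj a = complex_of_real ((cmod a)^2)" by (rule complex_norm_square[symmetric])
    also have "(norm w)^2 = s^2 * (cmod a)^2 * r"
      by (simp add: w_def norm_scaleC norm_mult r_def power_mult_distrib abs_of_pos s0)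
    finally have ineq: "0 \<le> s * (cmod a)^2 * (s * r - 2)"
      by (simp add: power2_eq_square algebra_simps)
    have "0 < s * (cmod a)^2" using s0 a0 by simp
    then have "0 \<le> s * r - 2" using ineq zero_le_mult_iff by (metis linorder_not_less)
    moreover have "s * r < 1" using r0 by (simp add: s_def)
    ultimately show False by simp
  qed
  then show ?thesis using nN by (auto simp: z_def)
qed

lemma bounded_linear_scaleC_left: "bounded_linear (\<lambda>z::complex. z *\<^sub>C (a::'a::complex_inner))"
  by (rule bounded_linear_intro[where K="norm a"])
     (auto simp: scaleC_add_left scaleR_scaleC scaleC_scaleC norm_scaleC scaleR_conv_of_real)

definition Kset :: "'a::complex_inner set \<Rightarrow> 'a set" where
  "Kset E = {(\<Sum>e\<in>E. c e *\<^sub>C e) | c. \<forall>e\<in>E. cmod (c e) \<le> 1}"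

lemma compact_Kset:
  fixes E :: "'a::complex_inner set"
  assumes "finite E" shows "compact (Kset E)"
  using assms
proof (induct E rule: finite_induct)
  case empty
  have "Kset ({}::'a set) = {0}" by (auto simp: Kset_def)
  then show ?case by simp
next
  case (insert a E)
  have eq: "Kset (insert a E) = (\<lambda>p. fst p *\<^sub>C a + snd p) ` (cball 0 1 \<times> Kset E)"
  proof (intro equalityI subsetI)
    fix x assume "x \<in> Kset (insert a E)"
    then obtain c where c: "x = (\<Sum>e\<in>insert a E. c e *\<^sub>C e)" "\<forall>e\<in>insert a E. cmod (c e) \<le> 1"
      by (auto simp: Kset_def)
    have x: "x = c a *\<^sub>C a + (\<Sum>e\<in>E. c e *\<^sub>C e)" using c(1) insert(1,2) by simp
    have "(c a, \<Sum>e\<in>E. c e *\<^sub>C e) \<in> cball 0 1 \<times> Kset E"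
      using c(2) by (auto simp: Kset_def)
    then show "x \<in> (\<lambda>p. fst p *\<^sub>C a + snd p) ` (cball 0 1 \<times> Kset E)"
      using x by force
  next
    fix x assume "x \<in> (\<lambda>p. fst p *\<^sub>C a + snd p) ` (cball 0 1 \<times> Kset E)"
    then obtain z c where zc: "cmod z \<le> 1" "\<forall>e\<in>E. cmod (c e) \<le> 1"
      "x = z *\<^sub>C a + (\<Sum>e\<in>E. c e *\<^sub>C e)"
      by (auto simp: Kset_def)
    define c' where "c' = c(a := z)"
    have "(\<Sum>e\<in>E. c' e *\<^sub>C e) = (\<Sum>e\<in>E. c e *\<^sub>C e)"
      by (rule sum.cong) (use insert(2) in \<open>auto simp: c'_def\<close>)
    then have "x = (\<Sum>e\<in>insert a E. c' e *\<^sub>C e)" using zc(3) insert(1,2) by (simp add: c'_def)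
    moreover have "\<forall>e\<in>insert a E. cmod (c' e) \<le> 1" using zc by (auto simp: c'_def)
    ultimately show "x \<in> Kset (insert a E)" unfolding Kset_def by blast
  qed
  have cont: "continuous_on (cball 0 1 \<times> Kset E) (\<lambda>p. fst p *\<^sub>C a + snd p)"
    by (intro continuous_intros linear_continuous_on[OF bounded_linear_scaleC_left, THEN continuous_on_compose2]) auto
  show ?case unfolding eq
    by (rule compact_continuous_image[OF cont]) (intro compact_Times compact_cball insert(3))
qed

lemma compact_onb:
  fixes E :: "'a::complex_inner set"
  assumes E: "finite E" "orthonormal E"
  shows "compact {x. onbp E x = x \<and> norm x \<le> 1}"
proof -
  interpret qq: oproj "onbp E" by (rule onbp_oproj[OF E])
  have eq: "{x. onbp E x = x \<and> norm x \<le> 1} = Kset E \<inter> ({x. onbp E x - x = 0} \<inter> cball 0 1)"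
  proof (intro equalityI subsetI)
    fix x assume x: "x \<in> {x. onbp E x = x \<and> norm x \<le> 1}"
    have "x \<in> Kset E"
      unfolding Kset_def
    proof (intro CollectI exI conjI)
      show "x = (\<Sum>e\<in>E. cinner e x *\<^sub>C e)" using x by (simp add: onbp_def)
      show "\<forall>e\<in>E. cmod (cinner e x) \<le> 1"
      proof
        fix e assume "e \<in> E"
        then have "norm e = 1" using E(2) by (simp add: orthonormal_def)
        then have "cmod (cinner e x) \<le> norm x" by (rule cinner_unit_bound)
        then show "cmod (cinner e x) \<le> 1" using x by simp
      qed
    qed
    then show "x \<in> Kset E \<inter> ({x. onbp E x - x = 0} \<inter> cball 0 1)" using x by auto
  qed auto
  have cl: "closed {x. onbp E x - x = 0}"
    using continuous_closed_preimage_constant[OF _ closed_UNIV, of "\<lambda>x. onbp E x - x" 0]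
    by (simp add: continuous_on_diff qq.cont continuous_on_id)
  show ?thesis unfolding eq
    by (intro compact_Int_closed compact_Kset E closed_Int cl closed_cball)
qed

lemma orthonormal_independent:
  fixes V :: "'a::complex_inner set"
  assumes "orthonormal V" shows "cvs.independent V"
proof
  assume "cvs.dependent V"
  then obtain t u where t: "finite t" "t \<subseteq> V" "(\<Sum>v\<in>t. u v *\<^sub>C v) = 0" "\<exists>v\<in>t. u v \<noteq> 0"
    unfolding cvs.dependent_explicit by blast
  then obtain w where w: "w \<in> t" "u w \<noteq> 0" by blast
  have "0 = cinner w (\<Sum>v\<in>t. u v *\<^sub>C v)" using t(3) by simp
  also have "\<dots> = (\<Sum>v\<in>t. u v * cinner w v)" by (simp add: cinner_sum_right cinner_scaleC_right)
  also have "\<dots> = (\<Sum>v\<in>t. if v = w then u w else 0)"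
  proof (rule sum.cong)
    fix x assume "x \<in> t"
    then have "x \<in> V" "w \<in> V" using t(2) w(1) by auto
    then show "u x * cinner w x = (if x = w then u w else 0)"
      using orthonormal_cinner[OF assms, of w x] by auto
  qed simp
  also have "\<dots> = u w" using t(1) w(1) by simp
  finally show False using w(2) by simp
qed

lemma fin_dim_inj:
  fixes W :: "'a::complex_inner set"
  assumes F: "finite F" "orthonormal F" and W: "csubspace W"
    and inj: "\<And>w. w \<in> W \<Longrightarrow> onbp F w = 0 \<Longrightarrow> w = 0"
  shows "\<exists>E. finite E \<and> orthonormal E \<and> (\<forall>w\<in>W. onbp E w = w)"
proof (cases "\<exists>v. onseq v W")
  case False
  then show ?thesis using dichotomy[OF W] by blast
next
  case True
  then obtain v where v: "onseq v W" by blast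
  have v1: "v n \<in> W" "norm (v n) = 1" for n using v unfolding onseq_def by auto
  have v2: "cinner (v m) (v n) = 0" if "m \<noteq> n" for m n using v that unfolding onseq_def by auto
  have vinj: "inj v"
  proof (rule injI)
    fix m n assume "v m = v n"
    show "m = n"
    proof (rule ccontr)
      assume "m \<noteq> n"
      then have "cinner (v n) (v n) = 0" using v2[of m n] \<open>v m = v n\<close> by simp
      then show False using v1(2)[of n] by (simp add: cinner_self_norm)
    qed
  qed
  define V where "V = v ` {..card F}"
  have Von: "orthonormal V" unfolding V_def orthonormal_def using v1 v2 by (metis imageE)
  have VW: "V \<subseteq> W" unfolding V_def using v1 by auto
  have cardV: "card V = Suc (card F)" unfolding V_def
    using card_image[OF inj_on_subset[OF vinj]] by simp
  have Wsub: "cvs.subspace W" using W unfolding csubspace_def cvs.subspace_def by simp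
  have spanW: "cvs.span V \<subseteq> W" by (rule cvs.span_minimal[OF VW Wsub])
  have mh: "module_hom scaleC scaleC (onbp F :: 'a \<Rightarrow> 'a)"
    by unfold_locales (simp_all add: clinear_add[OF onbp_clinear] clinear_scaleC[OF onbp_clinear]
        scaleC_add_right scaleC_add_left scaleC_scaleC)
  have injW: "inj_on (onbp F) W"
  proof (rule inj_onI)
    fix x y assume xy: "x \<in> W" "y \<in> W" "onbp F x = onbp F y"
    then have "onbp F (x - y) = 0" by (simp add: clinear_diff[OF onbp_clinear])
    then have "x - y = 0" using inj csubspace_diff[OF W xy(1) xy(2)] by blast
    then show "x = y" by simp
  qed
  have ind: "cvs.independent (onbp F ` V)"
    by (rule module_hom.independent_injective_image[OF mh orthonormal_independent[OF Von]])
       (rule inj_on_subset[OF injW spanW])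
  have sp: "onbp F ` V \<subseteq> cvs.span F"
  proof
    fix y assume "y \<in> onbp F ` V"
    then obtain x where "y = onbp F x" by blast
    then show "y \<in> cvs.span F"
      unfolding onbp_def by (rule ssubst) (rule cvs.span_sum, rule cvs.span_scale, rule cvs.span_base)
  qed
  have "card (onbp F ` V) \<le> card F" using cvs.independent_span_bound[OF F(1) ind sp] by simp
  moreover have "card (onbp F ` V) = card V" by (rule card_image[OF inj_on_subset[OF injW VW]])
  ultimately show ?thesis using cardV by simp
qed

lemma attain:
  fixes M :: "'a::chilbert_space set" and g :: "'a \<Rightarrow> real"
  assumes F: "finite F" "orthonormal F" and M: "csubspace M" "closed M" "M \<noteq> {0}"
    and g: "continuous_on UNIV g" and ginv: "\<And>x. g (onbp F x) = g x"
  shows "\<exists>x0\<in>M. norm x0 = 1 \<and> (\<forall>x\<in>M. norm x = 1 \<longrightarrow> g x0 \<le> g x)"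
proof -
  interpret qq: oproj "onbp F" by (rule onbp_oproj[OF F])
  define Q where "Q = onbp F"
  define N where "N = M \<inter> {x. Q x = 0}"
  have Nsub: "csubspace N" unfolding N_def Q_def
    by (intro csubspace_Int M(1) csubspace_kernel onbp_clinear)
  have NM: "N \<subseteq> M" by (auto simp: N_def)
  have Ncl: "closed N" unfolding N_def Q_def
    using continuous_closed_preimage_constant[OF qq.cont closed_UNIV, of 0]
    by (intro closed_Int M(2)) simp
  obtain y where y: "y \<in> M" "y \<noteq> 0" using M(3) csubspace_0[OF M(1)] by blast
  show ?thesis
  proof (cases "N = {0}")
    case True
    have inj: "w = 0" if "w \<in> M" "onbp F w = 0" for w
      using that True by (auto simp: N_def Q_def)
    obtain E where E: "finite E" "orthonormal E" "\<forall>w\<in>M. onbp E w = w"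
      using fin_dim_inj[OF F M(1) inj] by blast
    define S where "S = {x. onbp E x = x \<and> norm x \<le> 1} \<inter> (M \<inter> {x. norm x = 1})"
    have csph: "closed {x::'a. norm x = 1}"
      using continuous_closed_preimage_constant[OF continuous_on_norm_id closed_UNIV, of 1] by simp
    have Sc: "compact S" unfolding S_def
      by (intro compact_Int_closed compact_onb E closed_Int M(2) csph)
    have S_eq: "x \<in> S \<longleftrightarrow> x \<in> M \<and> norm x = 1" for x
      using E(3) by (auto simp: S_def)
    define y1 where "y1 = complex_of_real (1 / norm y) *\<^sub>C y"
    have "y1 \<in> M" "norm y1 = 1" using y csubspace_scaleC[OF M(1)]
      by (auto simp: y1_def norm_scaleC norm_divide)
    then have Sne: "S \<noteq> {}" using S_eq by blast
    obtain x0 where x0: "x0 \<in> S" "\<forall>x\<in>S. g x0 \<le> g x"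
      using continuous_attains_inf[OF Sc Sne continuous_on_subset[OF g subset_UNIV]] by blast
    show ?thesis using x0 S_eq by blast
  next
    case False
    then obtain z0 where z0: "z0 \<in> N" "z0 \<noteq> 0" using csubspace_0[OF Nsub] by blast
    define z where "z = complex_of_real (1 / norm z0) *\<^sub>C z0"
    have zN: "z \<in> N" using z0 csubspace_scaleC[OF Nsub] by (simp add: z_def)
    have z1: "norm z = 1" using z0 by (simp add: z_def norm_scaleC norm_divide)
    define W where "W = M \<inter> (\<Inter>n\<in>N. {y. cinner n y = 0})"
    have Wsub: "csubspace W" unfolding W_def by (intro csubspace_Int M(1) csubspace_INT csubspace_orth)
    have ccl: "closed {y. cinner n y = 0}" for n
      using continuous_closed_preimage_constant[OF continuous_cinner_right closed_UNIV, of n 0] by simp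
    have Wcl: "closed W" unfolding W_def using ccl by (intro closed_Int M(2) closed_INT) auto
    have WM: "W \<subseteq> M" by (auto simp: W_def)
    have inj: "w = 0" if "w \<in> W" "onbp F w = 0" for w
    proof -
      have "w \<in> N" using that by (auto simp: W_def N_def Q_def)
      then have "cinner w w = 0" using that(1) by (auto simp: W_def)
      then show ?thesis using cinner_eq_zero_iff by blast
    qed
    obtain E where E: "finite E" "orthonormal E" "\<forall>w\<in>W. onbp E w = w"
      using fin_dim_inj[OF F Wsub inj] by blast
    define S where "S = {x. onbp E x = x \<and> norm x \<le> 1} \<inter> W"
    have Sc: "compact S" unfolding S_def
      by (intro compact_Int_closed compact_onb E Wcl)
    have S_eq: "x \<in> S \<longleftrightarrow> x \<in> W \<and> norm x \<le> 1" for x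
      using E(3) by (auto simp: S_def)
    have "0 \<in> S" using S_eq csubspace_0[OF Wsub] by simp
    then have Sne: "S \<noteq> {}" by blast
    obtain w0 where w0: "w0 \<in> S" "\<forall>x\<in>S. g w0 \<le> g x"
      using continuous_attains_inf[OF Sc Sne continuous_on_subset[OF g subset_UNIV]] by blast
    have w0W: "w0 \<in> W" and w0n: "norm w0 \<le> 1" using w0(1) S_eq by auto
    define s where "s = sqrt (1 - (norm w0)^2)"
    have s2: "s^2 = 1 - (norm w0)^2"
      unfolding s_def by (rule real_sqrt_pow2) (use w0n power_le_one[of "norm w0" 2] in simp)
    define x0 where "x0 = w0 + complex_of_real s *\<^sub>C z"
    have x0M: "x0 \<in> M" unfolding x0_def
      using WM w0W NM zN by (intro csubspace_add M(1) csubspace_scaleC) auto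
    have "cinner z w0 = 0" using w0W zN by (auto simp: W_def)
    then have o: "cinner w0 (complex_of_real s *\<^sub>C z) = 0"
      by (simp add: cinner_scaleC_right cinner_commute[of w0 z])
    have "(norm x0)^2 = (norm w0)^2 + s^2"
      unfolding x0_def pythagoras[OF o] by (simp add: norm_scaleC z1)
    then have "(norm x0)^2 = 1" using s2 by simp
    then have x01: "norm x0 = 1" using power2_eq_1_iff[of "norm x0"] norm_ge_zero[of x0] by linarith
    have Qz: "onbp F z = 0" using zN by (simp add: N_def Q_def)
    have gx0: "g x0 = g w0"
    proof -
      have "onbp F x0 = onbp F w0" unfolding x0_def by (simp add: qq.add qq.scale Qz)
      then show ?thesis using ginv[of x0] ginv[of w0] by simp
    qed
    have "g x0 \<le> g x" if x: "x \<in> M" "norm x = 1" for x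
    proof -
      obtain n where n: "n \<in> N" "\<forall>m\<in>N. cinner m (x - n) = 0"
        using proj_thm[OF Nsub Ncl] by blast
      define w where "w = x - n"
      have wW: "w \<in> W" unfolding W_def w_def
        using n x(1) NM csubspace_diff[OF M(1)] by auto
      have "cinner n w = 0" using n by (simp add: w_def)
      then have "(norm (n + w))^2 = (norm n)^2 + (norm w)^2" by (rule pythagoras)
      then have "(norm n)^2 + (norm w)^2 = 1" using x(2) by (simp add: w_def)
      then have "(norm w)^2 \<le> 1" using zero_le_power2[of "norm n"] by linarith
      then have "norm w \<le> 1" using power2_le_imp_le[of "norm w" 1] by simp
      then have "w \<in> S" using wW S_eq by simp
      then have "g w0 \<le> g w" using w0 by blast
      also have "g w = g x"
      proof -
        have "onbp F n = 0" using n(1) by (simp add: N_def Q_def)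
        then have "onbp F x = onbp F w" by (simp add: w_def qq.diff)
        then show ?thesis using ginv[of x] ginv[of w] by simp
      qed
      finally show ?thesis using gx0 by simp
    qed
    then show ?thesis using x0M x01 by blast
  qed
qed

lemma good_AN:
  fixes T :: "'a::chilbert_space \<Rightarrow> 'a"
  assumes F: "finite F" "orthonormal F" and gd: "good (onbp F) T a"
    and cl: "clinear T" and bl: "bounded_linear T"
  shows "property_AN_star T"
  unfolding property_AN_star_def
proof (intro allI impI)
  fix M :: "'a set" assume M: "csubspace M \<and> closed M \<and> M \<noteq> {0}"
  interpret qq: oproj "onbp F" by (rule onbp_oproj[OF F])
  define Q where "Q = onbp F"
  define g where "g x = (norm (T (Q x)))^2 - (cmod a)^2 * (norm (Q x))^2" for x
  have gc: "continuous_on UNIV g" unfolding g_def Q_def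
    by (intro continuous_intros qq.cont linear_continuous_on[OF bl, THEN continuous_on_compose2]) auto
  have ginv: "g (onbp F x) = g x" for x unfolding g_def Q_def by simp
  have key: "(norm (T x))^2 = (cmod a)^2 * (norm x)^2 + g x" for x
  proof -
    have 1: "T (x - Q x) = a *\<^sub>C (x - Q x)" using gd unfolding good_def Q_def by (simp add: qq.diff)
    have 2: "Q (T (Q x)) = T (Q x)" using gd unfolding good_def Q_def by simp
    have Tx: "T x = a *\<^sub>C (x - Q x) + T (Q x)" using clinear_diff[OF cl, of x "Q x"] 1 by (simp add: algebra_simps)
    have o: "cinner (a *\<^sub>C (x - Q x)) (T (Q x)) = 0"
      using qq.orth'[of x "T (Q x)"] 2 by (simp add: Q_def cinner_scaleC_left)
    have "(norm (T x))^2 = (cmod a)^2 * (norm (x - Q x))^2 + (norm (T (Q x)))^2"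
      unfolding Tx pythagoras[OF o] by (simp add: norm_scaleC power_mult_distrib)
    also have "(norm (x - Q x))^2 = (norm x)^2 - (norm (Q x))^2" using qq.pyth[of x] by (simp add: Q_def)
    finally show ?thesis by (simp add: g_def algebra_simps)
  qed
  obtain x0 where x0: "x0 \<in> M" "norm x0 = 1" "\<forall>x\<in>M. norm x = 1 \<longrightarrow> g x0 \<le> g x"
    using attain[OF F] M gc ginv by blast
  have le: "norm (T x0) \<le> norm (T x)" if "x \<in> M" "norm x = 1" for x
  proof -
    have "(norm (T x0))^2 \<le> (norm (T x))^2" using key[of x0] key[of x] x0 that by simp
    then show ?thesis by (rule power2_le_imp_le) simp
  qed
  have "min_modulus_on T M = norm (T x0)"
  proof (rule antisym)
    show "min_modulus_on T M \<le> norm (T x0)" by (rule min_modulus_le[OF x0(1) x0(2)])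
    show "norm (T x0) \<le> min_modulus_on T M"
      unfolding min_modulus_on_def by (rule cInf_greatest) (use x0 le in auto)
  qed
  then show "property_N_star_on T M" unfolding property_N_star_on_def using x0 by auto
qed

lemma proj_good:
  fixes P :: "'a::chilbert_space \<Rightarrow> 'a"
  assumes F: "finite F" "orthonormal F" and S: "finite S" "orthonormal S" "\<forall>e\<in>S. onbp F e = e"
    and P: "(\<forall>x. P x = onbp S x) \<or> (\<forall>x. P x = x - onbp S x)"
  shows "\<exists>a. good (onbp F) P a"
proof -
  have z: "onbp S z = 0" if "onbp F z = 0" for z
  proof -
    have "cinner e z = 0" if "e \<in> S" for e
      using onbp_adj[OF F, of e z] S(3) that \<open>onbp F z = 0\<close> by simp
    then show ?thesis unfolding onbp_def by simp
  qed
  have r: "onbp F (onbp S x) = onbp S x" for x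
    unfolding onbp_def[of S] using S(3) onbp_clinear[of F]
    by (simp add: clinear_sum clinear_scaleC)
  interpret qq: oproj "onbp F" by (rule onbp_oproj[OF F])
  from P show ?thesis
  proof
    assume "\<forall>x. P x = onbp S x"
    then have "good (onbp F) P 0" unfolding good_def using z r by simp
    then show ?thesis by blast
  next
    assume "\<forall>x. P x = x - onbp S x"
    then have "good (onbp F) P 1" unfolding good_def using z r by (simp add: qq.diff)
    then show ?thesis by blast
  qed
qed

theorem proposition3p13:
  fixes P1 P2 :: "'a::chilbert_space \<Rightarrow> 'a"
  assumes "orth_proj P1" and "orth_proj P2"
    and "property_AN_star P1" and "property_AN_star P2"
  shows "property_AN_star (\<lambda>x. P1 x + P2 x) \<and> property_AN_star (\<lambda>x. P1 x - P2 x)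
    \<and> property_AN_star (P1 \<circ> P2) \<and> property_AN_star (P2 \<circ> P1)"
proof -
  have o1: "oproj P1" and o2: "oproj P2" using assms by (auto simp: oproj_def)
  interpret p1: oproj P1 by (rule o1)
  interpret p2: oproj P2 by (rule o2)
  obtain S1 where S1: "finite S1" "orthonormal S1" "(\<forall>x. P1 x = onbp S1 x) \<or> (\<forall>x. P1 x = x - onbp S1 x)"
    using fin_or_cofin[OF o1 assms(3)] by blast
  obtain S2 where S2: "finite S2" "orthonormal S2" "(\<forall>x. P2 x = onbp S2 x) \<or> (\<forall>x. P2 x = x - onbp S2 x)"
    using fin_or_cofin[OF o2 assms(4)] by blast
  obtain F where F: "finite F" "orthonormal F" "\<forall>b\<in>S1 \<union> S2. onbp F b = b"
    using gram_schmidt[of "S1 \<union> S2"] S1(1) S2(1) by blast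
  obtain a1 where g1: "good (onbp F) P1 a1" using proj_good[OF F(1,2) S1(1,2) _ S1(3)] F(3) by blast
  obtain a2 where g2: "good (onbp F) P2 a2" using proj_good[OF F(1,2) S2(1,2) _ S2(3)] F(3) by blast
  have qc: "clinear (onbp F)" by (rule onbp_clinear)
  have b1: "bounded_linear P1" and b2: "bounded_linear P2"
    using p1.bcl p2.bcl bounded_clinear_bounded_linear by auto
  show ?thesis
  proof (intro conjI)
    show "property_AN_star (\<lambda>x. P1 x + P2 x)"
      by (rule good_AN[OF F(1,2) good_plus[OF qc g1 g2]])
         (auto intro: clinear_plus p1.cl p2.cl bounded_linear_add b1 b2)
    show "property_AN_star (\<lambda>x. P1 x - P2 x)"
      by (rule good_AN[OF F(1,2) good_minus[OF qc g1 g2]])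
         (auto intro: clinear_sub p1.cl p2.cl bounded_linear_sub b1 b2)
    show "property_AN_star (P1 \<circ> P2)"
      by (rule good_AN[OF F(1,2) good_comp[OF qc p1.cl g1 g2]])
         (auto simp: comp_def intro: clinear_comp p1.cl p2.cl bounded_linear_compose[OF b1 b2])
    show "property_AN_star (P2 \<circ> P1)"
      by (rule good_AN[OF F(1,2) good_comp[OF qc p2.cl g2 g1]])
         (auto simp: comp_def intro: clinear_comp p1.cl p2.cl bounded_linear_compose[OF b2 b1])
  qed
qed

end
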